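(* Let $G$ be a finite group. The graph $\mathcal{P}^*(G)/\mathtt{N}$ is a tame and pseudo-covering quotient of $\mathcal{P}^*(G)$. In particular $\mathcal{P}^*(G)$ and $\mathcal{P}^*(G)/\mathtt{N}$ have the same number of connected components.
   Context: The power graph $\mathcal{P}(G)$ has vertex set $G$, distinct $x,y$ adjacent iff one is a positive integer power of the other; $\mathcal{P}^*(G)$ is its subgraph induced on $G\setminus\{1\}$; graphs carry a loop at each vertex. $x\mathtt{N}y$ iff $x,y$ have the same closed neighbourhood in $\mathcal{P}(G)$. For a graph $\Gamma$ and equivalence $\sim$ on its vertices, $\Gamma/\sim$ has vertex set the classes, classes joined iff some representatives are joined. The quotient is tame (resp. pseudo-covering) if the projection $x\mapsto[x]$ is: tame means $[x]=[y]$ implies $x,y$ are joined by a path in $\Gamma$; pseudo-covering means surjective and locally strong, i.e. whenever $\{[x_1],[x_2]\}$ is an edge, every $\tilde x_1\in[x_1]$ is adjacent (or equal) to some $\tilde x_2\in[x_2]$. *)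

theory Defs
  imports "HOL-Algebra.Group"
begin

definition graph_rel :: "'a set \<Rightarrow> ('a \<Rightarrow> 'a \<Rightarrow> bool) \<Rightarrow> ('a \<times> 'a) set" where
  "graph_rel V E = {(x, y). x \<in> V \<and> y \<in> V \<and> (E x y \<or> x = y)}"

definition connected_by_path :: "'a set \<Rightarrow> ('a \<Rightarrow> 'a \<Rightarrow> bool) \<Rightarrow> 'a \<Rightarrow> 'a \<Rightarrow> bool" where
  "connected_by_path V E x y \<longleftrightarrow> x \<in> V \<and> y \<in> V \<and> (x, y) \<in> (graph_rel V E)\<^sup>*"

definition components :: "'a set \<Rightarrow> ('a \<Rightarrow> 'a \<Rightarrow> bool) \<Rightarrow> 'a set set" where
  "components V E = V // {(x, y). connected_by_path V E x y}"

text \<open>Quotient graph by an equivalence R on V: vertices are the classes V // R,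
  classes joined iff some representatives are joined.\<close>
definition quot_edge :: "('a \<Rightarrow> 'a \<Rightarrow> bool) \<Rightarrow> 'a set \<Rightarrow> 'a set \<Rightarrow> bool" where
  "quot_edge E A B \<longleftrightarrow> (\<exists>a\<in>A. \<exists>b\<in>B. E a b \<or> a = b)"

definition tame_quotient :: "'a set \<Rightarrow> ('a \<Rightarrow> 'a \<Rightarrow> bool) \<Rightarrow> ('a \<times> 'a) set \<Rightarrow> bool" where
  "tame_quotient V E R \<longleftrightarrow>
     (\<forall>x\<in>V. \<forall>y\<in>V. R `` {x} = R `` {y} \<longrightarrow> connected_by_path V E x y)"

definition pseudo_covering_quotient :: "'a set \<Rightarrow> ('a \<Rightarrow> 'a \<Rightarrow> bool) \<Rightarrow> ('a \<times> 'a) set \<Rightarrow> bool" where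
  "pseudo_covering_quotient V E R \<longleftrightarrow>
     (\<lambda>x. R `` {x}) ` V = V // R \<and>
     (\<forall>x1\<in>V. \<forall>x2\<in>V. quot_edge E (R `` {x1}) (R `` {x2}) \<longrightarrow>
        (\<forall>y1\<in>R `` {x1}. \<exists>y2\<in>R `` {x2}. E y1 y2 \<or> y1 = y2))"

definition power_adj :: "('a, 'b) monoid_scheme \<Rightarrow> 'a \<Rightarrow> 'a \<Rightarrow> bool" where
  "power_adj G x y \<longleftrightarrow> x \<in> carrier G \<and> y \<in> carrier G \<and>
     (\<exists>n::nat. n > 0 \<and> (y = x [^]\<^bsub>G\<^esub> n \<or> x = y [^]\<^bsub>G\<^esub> n))"

definition power_nbhd :: "('a, 'b) monoid_scheme \<Rightarrow> 'a \<Rightarrow> 'a set" where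
  "power_nbhd G x = {y \<in> carrier G. power_adj G x y}"

definition pstar_vertices :: "('a, 'b) monoid_scheme \<Rightarrow> 'a set" where
  "pstar_vertices G = carrier G - {\<one>\<^bsub>G\<^esub>}"

definition N_rel :: "('a, 'b) monoid_scheme \<Rightarrow> ('a \<times> 'a) set" where
  "N_rel G = {(x, y). x \<in> pstar_vertices G \<and> y \<in> pstar_vertices G \<and>
                      power_nbhd G x = power_nbhd G y}"

end

theory Submission
  imports Defs
begin

lemma conn_trans:
  "connected_by_path V E x y \<Longrightarrow> connected_by_path V E y z \<Longrightarrow> connected_by_path V E x z"
  unfolding connected_by_path_def by (meson rtrancl_trans)

lemma conn_edge:
  "x \<in> V \<Longrightarrow> y \<in> V \<Longrightarrow> E x y \<or> x = y \<Longrightarrow> connected_by_path V E x y"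
  unfolding connected_by_path_def graph_rel_def by auto

lemma conn_sym:
  assumes "symp E" "connected_by_path V E x y"
  shows "connected_by_path V E y x"
proof -
  have s: "sym (graph_rel V E)"
  proof (rule symI)
    fix a b assume "(a, b) \<in> graph_rel V E"
    then have "a \<in> V" "b \<in> V" "E a b \<or> a = b" by (auto simp: graph_rel_def)
    moreover have "E a b \<Longrightarrow> E b a" using assms(1) by (rule sympD)
    ultimately show "(b, a) \<in> graph_rel V E" unfolding graph_rel_def by blast
  qed
  have s2: "sym ((graph_rel V E)\<^sup>*)" using s by (rule sym_rtrancl)
  have xy: "x \<in> V" "y \<in> V" "(x, y) \<in> (graph_rel V E)\<^sup>*"
    using assms(2) unfolding connected_by_path_def by auto
  have "(y, x) \<in> (graph_rel V E)\<^sup>*" using s2 xy(3) by (rule symD)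
  then show ?thesis using xy unfolding connected_by_path_def by simp
qed

lemma conn_equiv:
  assumes "symp E"
  shows "equiv V {(x, y). connected_by_path V E x y}"
proof -
  have "sym {(x, y). connected_by_path V E x y}"
  proof (rule symI)
    fix a b assume "(a, b) \<in> {(x, y). connected_by_path V E x y}"
    then have "connected_by_path V E a b" by simp
    then have "connected_by_path V E b a" by (rule conn_sym[OF assms])
    then show "(b, a) \<in> {(x, y). connected_by_path V E x y}" by simp
  qed
  moreover have "trans {(x, y). connected_by_path V E x y}"
  proof (rule transI)
    fix a b c assume "(a, b) \<in> {(x, y). connected_by_path V E x y}" "(b, c) \<in> {(x, y). connected_by_path V E x y}"
    then show "(a, c) \<in> {(x, y). connected_by_path V E x y}" using conn_trans[of V E a b c] by simp
  qed
  moreover have "refl_on V {(x, y). connected_by_path V E x y}"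
    unfolding refl_on_def by (auto simp: connected_by_path_def)
  moreover have "{(x, y). connected_by_path V E x y} \<subseteq> V \<times> V"
    by (auto simp: connected_by_path_def)
  ultimately show ?thesis by (simp add: equiv_def)
qed

lemma conn_forward:
  assumes eq: "equiv V R" and c: "connected_by_path V E x y"
  shows "connected_by_path (V // R) (quot_edge E) (R `` {x}) (R `` {y})"
proof -
  have xV: "x \<in> V" and "(x, y) \<in> (graph_rel V E)\<^sup>*" using c by (auto simp: connected_by_path_def)
  from this(2) show ?thesis
  proof (induction rule: rtrancl_induct)
    case base
    have "R `` {x} \<in> V // R" using xV by (rule quotientI)
    then show ?case using conn_edge[of "R `` {x}" "V // R" "R `` {x}" "quot_edge E"] by blast
  next
    case (step z w)
    have zw: "z \<in> V" "w \<in> V" "E z w \<or> z = w" using step(2) by (auto simp: graph_rel_def)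
    have "z \<in> R `` {z}" by (rule equiv_class_self[OF eq zw(1)])
    moreover have "w \<in> R `` {w}" by (rule equiv_class_self[OF eq zw(2)])
    ultimately have qe: "quot_edge E (R `` {z}) (R `` {w})" using zw(3) unfolding quot_edge_def by blast
    have "R `` {z} \<in> V // R" using zw(1) by (rule quotientI)
    moreover have "R `` {w} \<in> V // R" using zw(2) by (rule quotientI)
    ultimately have "connected_by_path (V // R) (quot_edge E) (R `` {z}) (R `` {w})"
      using qe by (intro conn_edge) simp_all
    then show ?case using step(3) conn_trans by metis
  qed
qed

lemma conn_backward:
  assumes eq: "equiv V R"
    and tame: "\<And>x y. x \<in> V \<Longrightarrow> y \<in> V \<Longrightarrow> (x, y) \<in> R \<Longrightarrow> connected_by_path V E x y"
    and xV: "x \<in> V" and yV: "y \<in> V"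
    and c: "connected_by_path (V // R) (quot_edge E) (R `` {x}) (R `` {y})"
  shows "connected_by_path V E x y"
proof -
  have "(R `` {x}, R `` {y}) \<in> (graph_rel (V // R) (quot_edge E))\<^sup>*"
    using c by (auto simp: connected_by_path_def)
  then have "\<forall>b\<in>R `` {y}. connected_by_path V E x b"
  proof (induction rule: rtrancl_induct)
    case base
    show ?case
    proof
      fix b assume "b \<in> R `` {x}"
      then have xb: "(x, b) \<in> R" by simp
      then have "b \<in> V" using equiv_type[OF eq] by blast
      then show "connected_by_path V E x b" using xV xb by (intro tame)
    qed
  next
    case (step B C)
    have BQ: "B \<in> V // R" and CQ: "C \<in> V // R" and ed: "quot_edge E B C \<or> B = C"
      using step(2) by (auto simp: graph_rel_def)
    show ?case
    proof (cases "B = C")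
      case True then show ?thesis using step(3) by simp
    next
      case False
      then obtain a b where ab: "a \<in> B" "b \<in> C" "E a b \<or> a = b" using ed by (auto simp: quot_edge_def)
      obtain c where cV: "c \<in> V" and Cc: "C = R `` {c}" using CQ by (auto elim: quotientE)
      have BV: "B \<subseteq> V" using BQ eq by (meson in_quotient_imp_subset)
      have CV: "C \<subseteq> V" using CQ eq by (meson in_quotient_imp_subset)
      show ?thesis
      proof
        fix w assume wC: "w \<in> C"
        have "{b, w} \<subseteq> C" using ab(2) wC by simp
        then have bwR: "(b, w) \<in> R" by (rule in_quotient_imp_in_rel[OF eq CQ])
        have "b \<in> V" "w \<in> V" using ab(2) wC CV by auto
        then have bw: "connected_by_path V E b w" using bwR by (rule tame)
        have "a \<in> V" "b \<in> V" using ab(1,2) BV CV by auto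
        then have ab': "connected_by_path V E a b" using ab(3) by (rule conn_edge)
        have "connected_by_path V E x a" using step(3) ab(1) by (rule bspec)
        then show "connected_by_path V E x w" using ab' bw by (meson conn_trans)
      qed
    qed
  qed
  moreover have "y \<in> R `` {y}" by (rule equiv_class_self[OF eq yV])
  ultimately show ?thesis by (rule bspec)
qed

lemma card_components_eq:
  assumes eq: "equiv V R"
    and symE: "\<And>x y. E x y \<Longrightarrow> E y x"
    and tame: "\<And>x y. x \<in> V \<Longrightarrow> y \<in> V \<Longrightarrow> (x, y) \<in> R \<Longrightarrow> connected_by_path V E x y"
  shows "card (components V E) = card (components (V // R) (quot_edge E))"
proof -
  let ?CV = "{(x, y). connected_by_path V E x y}"
  let ?Q = "V // R"
  let ?CQ = "{(x, y). connected_by_path ?Q (quot_edge E) x y}"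
  let ?g = "\<lambda>X. (\<lambda>x. R `` {x}) ` X"
  have symQ: "\<And>A B. quot_edge E A B \<Longrightarrow> quot_edge E B A"
  proof -
    fix A B assume "quot_edge E A B"
    then obtain a b where "a \<in> A" "b \<in> B" "E a b \<or> a = b" unfolding quot_edge_def by blast
    moreover have "E a b \<Longrightarrow> E b a" by (rule symE)
    ultimately show "quot_edge E B A" unfolding quot_edge_def by blast
  qed
  have "symp E" using symE by (rule sympI)
  then have eqV: "equiv V ?CV" by (rule conn_equiv)
  have "symp (quot_edge E)" using symQ by (rule sympI)
  then have eqQ: "equiv ?Q ?CQ" by (rule conn_equiv)
  have iff: "\<And>x y. x \<in> V \<Longrightarrow> y \<in> V \<Longrightarrow>
      connected_by_path V E x y \<longleftrightarrow> connected_by_path ?Q (quot_edge E) (R `` {x}) (R `` {y})"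
  proof -
    fix x y assume xy: "x \<in> V" "y \<in> V"
    show "connected_by_path V E x y \<longleftrightarrow> connected_by_path ?Q (quot_edge E) (R `` {x}) (R `` {y})"
    proof
      assume "connected_by_path V E x y"
      then show "connected_by_path ?Q (quot_edge E) (R `` {x}) (R `` {y})" by (rule conn_forward[OF eq])
    next
      assume "connected_by_path ?Q (quot_edge E) (R `` {x}) (R `` {y})"
      then show "connected_by_path V E x y" using conn_backward[of V R E x y] eq tame xy by blast
    qed
  qed
  have gclass: "?g (?CV `` {x}) = ?CQ `` {R `` {x}}" if xV: "x \<in> V" for x
  proof
    show "?g (?CV `` {x}) \<subseteq> ?CQ `` {R `` {x}}"
    proof
      fix B assume "B \<in> ?g (?CV `` {x})"
      then obtain y where "y \<in> ?CV `` {x}" and By: "B = R `` {y}" by blast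
      then have cxy: "connected_by_path V E x y" by simp
      then have "connected_by_path ?Q (quot_edge E) (R `` {x}) (R `` {y})" by (rule conn_forward[OF eq])
      then show "B \<in> ?CQ `` {R `` {x}}" using By by simp
    qed
    show "?CQ `` {R `` {x}} \<subseteq> ?g (?CV `` {x})"
    proof
      fix B assume "B \<in> ?CQ `` {R `` {x}}"
      then have Bc: "connected_by_path ?Q (quot_edge E) (R `` {x}) B" by auto
      then have "B \<in> ?Q" by (simp add: connected_by_path_def)
      then obtain y where yV: "y \<in> V" and By: "B = R `` {y}" by (auto elim: quotientE)
      then have "connected_by_path V E x y" using iff[OF xV yV] Bc by simp
      then show "B \<in> ?g (?CV `` {x})" using By by auto
    qed
  qed
  have inj: "inj_on ?g (V // ?CV)"
  proof (rule inj_onI)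
    fix X Y assume X: "X \<in> V // ?CV" and Y: "Y \<in> V // ?CV" and g: "?g X = ?g Y"
    obtain x where xV: "x \<in> V" and Xx: "X = ?CV `` {x}" using X by (auto elim: quotientE)
    obtain y where yV: "y \<in> V" and Yy: "Y = ?CV `` {y}" using Y by (auto elim: quotientE)
    have "?CQ `` {R `` {x}} = ?CQ `` {R `` {y}}" using g gclass xV yV Xx Yy by simp
    moreover have "R `` {x} \<in> ?Q" "R `` {y} \<in> ?Q" using xV yV by (auto intro: quotientI)
    ultimately have "(R `` {x}, R `` {y}) \<in> ?CQ" using eq_equiv_class_iff[OF eqQ] by metis
    then have "(x, y) \<in> ?CV" using iff[OF xV yV] by simp
    then have "?CV `` {x} = ?CV `` {y}" by (rule equiv_class_eq[OF eqV])
    then show "X = Y" using Xx Yy by simp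
  qed
  have img: "?g ` (V // ?CV) = ?Q // ?CQ"
  proof
    show "?g ` (V // ?CV) \<subseteq> ?Q // ?CQ"
    proof
      fix Z assume "Z \<in> ?g ` (V // ?CV)"
      then obtain x where xV: "x \<in> V" and Z: "Z = ?g (?CV `` {x})" by (auto elim!: quotientE)
      have "R `` {x} \<in> ?Q" using xV by (rule quotientI)
      then have "?CQ `` {R `` {x}} \<in> ?Q // ?CQ" by (rule quotientI)
      then show "Z \<in> ?Q // ?CQ" using Z gclass[OF xV] by simp
    qed
    show "?Q // ?CQ \<subseteq> ?g ` (V // ?CV)"
    proof
      fix Z assume "Z \<in> ?Q // ?CQ"
      then obtain B where "B \<in> ?Q" "Z = ?CQ `` {B}" by (auto elim: quotientE)
      then obtain x where xV: "x \<in> V" "Z = ?CQ `` {R `` {x}}" by (auto elim: quotientE)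
      have "?CV `` {x} \<in> V // ?CV" using xV(1) by (rule quotientI)
      then have "?g (?CV `` {x}) \<in> ?g ` (V // ?CV)" by (rule imageI)
      then show "Z \<in> ?g ` (V // ?CV)" using gclass[OF xV(1)] xV(2) by simp
    qed
  qed
  show ?thesis unfolding components_def using card_image[OF inj] img by simp
qed

lemma padj_refl:
  assumes "group G" "x \<in> carrier G"
  shows "power_adj G x x"
proof -
  interpret group G by fact
  have "x [^]\<^bsub>G\<^esub> (1::nat) = x" using assms(2) by simp
  then show ?thesis unfolding power_adj_def using assms(2) by (metis zero_less_one)
qed

theorem mainTheorem18:
  fixes G :: "('a, 'b) monoid_scheme"
  assumes "group G" and "finite (carrier G)"
  shows "tame_quotient (pstar_vertices G) (power_adj G) (N_rel G)
       \<and> pseudo_covering_quotient (pstar_vertices G) (power_adj G) (N_rel G)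
       \<and> card (components (pstar_vertices G) (power_adj G))
         = card (components (pstar_vertices G // N_rel G) (quot_edge (power_adj G)))"
proof -
  let ?V = "pstar_vertices G" and ?E = "power_adj G" and ?R = "N_rel G"
  have Vc: "?V \<subseteq> carrier G" by (auto simp: pstar_vertices_def)
  have eq: "equiv ?V ?R"
    unfolding equiv_def refl_on_def sym_def trans_def N_rel_def by auto
  have symE: "\<And>x y. ?E x y \<Longrightarrow> ?E y x" unfolding power_adj_def by blast
  have tameR: "connected_by_path ?V ?E x y" if "x \<in> ?V" "y \<in> ?V" "(x, y) \<in> ?R" for x y
  proof -
    have "y \<in> power_nbhd G y" using that Vc padj_refl[OF assms(1), of y] by (auto simp: power_nbhd_def)
    then have "y \<in> power_nbhd G x" using that by (auto simp: N_rel_def)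
    then show ?thesis using that by (intro conn_edge) (auto simp: power_nbhd_def)
  qed
  have T: "tame_quotient ?V ?E ?R"
    unfolding tame_quotient_def
  proof (intro ballI impI)
    fix x y assume "x \<in> ?V" "y \<in> ?V" "?R `` {x} = ?R `` {y}"
    then have "(x, y) \<in> ?R" using eq by (simp add: equiv_class_eq_iff)
    then show "connected_by_path ?V ?E x y" using tameR \<open>x \<in> ?V\<close> \<open>y \<in> ?V\<close> by blast
  qed
  have P: "pseudo_covering_quotient ?V ?E ?R"
    unfolding pseudo_covering_quotient_def
  proof (intro conjI ballI impI)
    show "(\<lambda>x. ?R `` {x}) ` ?V = ?V // ?R" unfolding quotient_def by auto
  next
    fix x1 x2 y1
    assume x1: "x1 \<in> ?V" and x2: "x2 \<in> ?V" and qe: "quot_edge ?E (?R `` {x1}) (?R `` {x2})"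
      and y1: "y1 \<in> ?R `` {x1}"
    obtain a b where a: "a \<in> ?R `` {x1}" and b: "b \<in> ?R `` {x2}" and ab: "?E a b \<or> a = b"
      using qe by (auto simp: quot_edge_def)
    have bc: "b \<in> carrier G" using b Vc by (auto simp: N_rel_def)
    have "b \<in> power_nbhd G a" using ab bc padj_refl[OF assms(1), of b] by (auto simp: power_nbhd_def)
    moreover have "power_nbhd G a = power_nbhd G y1" using a y1 by (auto simp: N_rel_def)
    ultimately have "?E y1 b" by (auto simp: power_nbhd_def)
    then show "\<exists>y2\<in>?R `` {x2}. ?E y1 y2 \<or> y1 = y2" using b by blast
  qed
  have C: "card (components ?V ?E) = card (components (?V // ?R) (quot_edge ?E))"
    by (rule card_components_eq[OF eq symE tameR])
  show ?thesis using T P C by blast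
qed

end
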